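(* $S\mathbb{H}$ is diffeomorphic to $S^3\times S^3\times\mathbb{R}$. In particular, $S\mathbb{H}$ is orientable.
   Context: For $q=a+bi+cj+dk\in\mathbb{H}$, $\bar q=a-bi-cj-dk$. $\mathcal{V}=\mathrm{span}_\mathbb{R}\{1,i,j\}$. $S\mathbb{H}=\{(\xi,\eta)\in\mathbb{H}^2\setminus\{(0,0)\}:\xi\bar\eta\in\mathcal{V}\}$, a subset of $\mathbb{H}^2\cong\mathbb{R}^8$. *)

theory Defs
  imports "HOL-Analysis.Analysis"
begin

text \<open>Quaternions a + bi + cj + dk are modelled as vectors in real^4 with
  components (q$1, q$2, q$3, q$4) = (a, b, c, d).\<close>

definition qmult :: "real^4 \<Rightarrow> real^4 \<Rightarrow> real^4" where
  "qmult p q = vector [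
     p$1*q$1 - p$2*q$2 - p$3*q$3 - p$4*q$4,
     p$1*q$2 + p$2*q$1 + p$3*q$4 - p$4*q$3,
     p$1*q$3 - p$2*q$4 + p$3*q$1 + p$4*q$2,
     p$1*q$4 + p$2*q$3 - p$3*q$2 + p$4*q$1]"

definition qconj :: "real^4 \<Rightarrow> real^4" where
  "qconj q = vector [q$1, - q$2, - q$3, - q$4]"

definition qV :: "(real^4) set" where
  "qV = span {vector [1,0,0,0], vector [0,1,0,0], vector [0,0,1,0]}"

definition SH :: "((real^4) \<times> (real^4)) set" where
  "SH = {(\<xi>, \<eta>). (\<xi>, \<eta>) \<noteq> (0, 0) \<and> qmult \<xi> (qconj \<eta>) \<in> qV}"

fun Cn_on :: "nat \<Rightarrow> 'a::euclidean_space set \<Rightarrow> ('a \<Rightarrow> 'b::real_normed_vector) \<Rightarrow> bool" where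
  "Cn_on 0 U f = continuous_on U f"
| "Cn_on (Suc n) U f = (\<exists>f'. (\<forall>x\<in>U. (f has_derivative f' x) (at x)) \<and>
                              (\<forall>v. Cn_on n U (\<lambda>x. f' x v)))"

definition smooth_on_open :: "'a::euclidean_space set \<Rightarrow> ('a \<Rightarrow> 'b::real_normed_vector) \<Rightarrow> bool" where
  "smooth_on_open U f \<longleftrightarrow> open U \<and> (\<forall>n. Cn_on n U f)"

definition smooth_map_on :: "'a::euclidean_space set \<Rightarrow> ('a \<Rightarrow> 'b::euclidean_space) \<Rightarrow> bool" where
  "smooth_map_on S f \<longleftrightarrow> (\<forall>x\<in>S. \<exists>U F. x \<in> U \<and> smooth_on_open U F \<and> (\<forall>y\<in>S \<inter> U. F y = f y))"

definition diffeomorphic :: "'a::euclidean_space set \<Rightarrow> 'b::euclidean_space set \<Rightarrow> bool" where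
  "diffeomorphic S T \<longleftrightarrow> (\<exists>f g. f ` S \<subseteq> T \<and> g ` T \<subseteq> S \<and>
     (\<forall>x\<in>S. g (f x) = x) \<and> (\<forall>y\<in>T. f (g y) = y) \<and>
     smooth_map_on S f \<and> smooth_map_on T g)"

end

theory Submission
  imports Defs
begin

lemma vector_4 [simp]:
 "(vector [x,y,z,w] ::('a::zero)^4)$1 = x"
 "(vector [x,y,z,w] ::('a::zero)^4)$2 = y"
 "(vector [x,y,z,w] ::('a::zero)^4)$3 = z"
 "(vector [x,y,z,w] ::('a::zero)^4)$4 = w"
  unfolding vector_def by simp_all

lemma qV_iff: "x \<in> qV \<longleftrightarrow> x$4 = 0"
proof
  assume "x \<in> qV"
  then show "x$4 = 0" unfolding qV_def
    by (induction rule: span_induct_alt) auto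
next
  assume h: "x$4 = 0"
  have "x = x$1 *\<^sub>R vector [1,0,0,0] + x$2 *\<^sub>R vector [0,1,0,0] + x$3 *\<^sub>R vector [0,0,1,0]"
    using h by (simp add: vec_eq_iff forall_4)
  also have "\<dots> \<in> qV" unfolding qV_def
    by (intro span_add span_scale span_base) auto
  finally show "x \<in> qV" .
qed

definition Bf :: "real^4 \<Rightarrow> real^4 \<Rightarrow> real" where
  "Bf a b = a$4*b$1 - a$1*b$4 + a$3*b$2 - a$2*b$3"

lemma SH_iff: "qmult a (qconj b) \<in> qV \<longleftrightarrow> Bf a b = 0"
  by (simp add: qV_iff qmult_def qconj_def Bf_def algebra_simps)

definition uu :: "(real^4) \<times> (real^4) \<Rightarrow> real^4" where
  "uu p = vector [fst p$4 + snd p$1, fst p$1 - snd p$4, fst p$3 + snd p$2, fst p$2 - snd p$3]"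
definition vv :: "(real^4) \<times> (real^4) \<Rightarrow> real^4" where
  "vv p = vector [fst p$4 - snd p$1, fst p$1 + snd p$4, fst p$3 - snd p$2, fst p$2 + snd p$3]"
definition Linv :: "(real^4) \<times> (real^4) \<Rightarrow> (real^4) \<times> (real^4)" where
  "Linv w = (vector [(fst w$2 + snd w$2)/2, (fst w$4 + snd w$4)/2, (fst w$3 + snd w$3)/2, (fst w$1 + snd w$1)/2],
             vector [(fst w$1 - snd w$1)/2, (fst w$3 - snd w$3)/2, (snd w$4 - fst w$4)/2, (snd w$2 - fst w$2)/2])"

lemma Linv_L: "Linv (uu p, vv p) = p"
  by (cases p) (simp add: Linv_def uu_def vv_def vec_eq_iff forall_4)
lemma uu_Linv: "uu (Linv w) = fst w"
  by (simp add: Linv_def uu_def vec_eq_iff forall_4 field_simps)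
lemma vv_Linv: "vv (Linv w) = snd w"
  by (simp add: Linv_def vv_def vec_eq_iff forall_4 field_simps)
lemma B_uv: "4 * Bf (fst p) (snd p) = uu p \<bullet> uu p - vv p \<bullet> vv p"
  by (simp add: Bf_def uu_def vv_def inner_vec_def sum_4 algebra_simps power2_eq_square)
lemma lin_uu: "bounded_linear uu"
  by (rule linear_conv_bounded_linear[THEN iffD1], rule linearI) (auto simp: uu_def vec_eq_iff forall_4 algebra_simps)
lemma lin_vv: "bounded_linear vv"
  by (rule linear_conv_bounded_linear[THEN iffD1], rule linearI) (auto simp: vv_def vec_eq_iff forall_4 algebra_simps)
lemma lin_Linv: "bounded_linear Linv"
  by (rule linear_conv_bounded_linear[THEN iffD1], rule linearI) (auto simp: Linv_def vec_eq_iff forall_4 field_simps)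


lemma Cn_mono: "Cn_on (Suc n) U f \<Longrightarrow> Cn_on n U f"
proof (induction n arbitrary: f)
  case 0
  then obtain f' where "\<forall>x\<in>U. (f has_derivative f' x) (at x)" by auto
  then show ?case
    by (auto intro!: continuous_at_imp_continuous_on has_derivative_continuous)
next
  case (Suc n)
  then obtain f' where "\<forall>x\<in>U. (f has_derivative f' x) (at x)" "\<forall>v. Cn_on (Suc n) U (\<lambda>x. f' x v)"
    by auto
  then show ?case using Suc.IH by auto
qed

lemma Cn_const: "Cn_on n U (\<lambda>x. c)"
proof (induction n arbitrary: c)
  case 0 then show ?case by simp
next
  case (Suc n)
  show ?case unfolding Cn_on.simps by (rule exI[of _ "\<lambda>x v. 0"]) (auto simp: Suc)
qed

lemma Cn_cong:
  assumes "open U" "\<And>x. x \<in> U \<Longrightarrow> f x = g x" "Cn_on n U f"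
  shows "Cn_on n U g"
  using assms(3)
proof (cases n)
  case 0 then show ?thesis using assms continuous_on_cong by fastforce
next
  case (Suc m)
  then obtain f' where "\<forall>x\<in>U. (f has_derivative f' x) (at x)" "\<forall>v. Cn_on m U (\<lambda>x. f' x v)"
    using assms(3) by auto
  moreover have "\<forall>x\<in>U. (g has_derivative f' x) (at x)"
    using calculation(1) assms(1,2) by (metis has_derivative_transform_within_open)
  ultimately show ?thesis using Suc by auto
qed

lemma Cn_add: "Cn_on n U f \<Longrightarrow> Cn_on n U g \<Longrightarrow> Cn_on n U (\<lambda>x. f x + g x)"
proof (induction n arbitrary: f g)
  case 0 then show ?case by (auto intro: continuous_on_add)
next
  case (Suc n)
  obtain f' where f: "\<forall>x\<in>U. (f has_derivative f' x) (at x)" "\<forall>v. Cn_on n U (\<lambda>x. f' x v)"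
    using Suc.prems by auto
  obtain g' where g: "\<forall>x\<in>U. (g has_derivative g' x) (at x)" "\<forall>v. Cn_on n U (\<lambda>x. g' x v)"
    using Suc.prems by auto
  show ?case
    apply (simp only: Cn_on.simps)
    apply (rule exI[of _ "\<lambda>x v. f' x v + g' x v"])
    using f g Suc.IH by (simp add: has_derivative_add)
qed

lemma Cn_bilinear:
  assumes bb: "bounded_bilinear pr"
  shows "Cn_on n U a \<Longrightarrow> Cn_on n U b \<Longrightarrow> Cn_on n U (\<lambda>x. pr (a x) (b x))"
proof (induction n arbitrary: a b)
  case 0 then show ?case using bounded_bilinear.continuous_on[OF bb] by auto
next
  case (Suc n)
  obtain a' where a: "\<forall>x\<in>U. (a has_derivative a' x) (at x)" "\<forall>v. Cn_on n U (\<lambda>x. a' x v)"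
    using Suc.prems by auto
  obtain b' where b: "\<forall>x\<in>U. (b has_derivative b' x) (at x)" "\<forall>v. Cn_on n U (\<lambda>x. b' x v)"
    using Suc.prems by auto
  have an: "Cn_on n U a" "Cn_on n U b" using Suc.prems Cn_mono by blast+
  show ?case
    apply (simp only: Cn_on.simps)
    apply (rule exI[of _ "\<lambda>x v. pr (a x) (b' x v) + pr (a' x v) (b x)"])
    apply (intro conjI ballI allI)
    using a b bounded_bilinear.FDERIV[OF bb] apply blast
    apply (rule Cn_add)
     apply (rule Suc.IH[OF an(1)]) using b apply blast
    apply (rule Suc.IH[OF _ an(2)]) using a apply blast
    done
qed


lemma Cn_sum:
  assumes "finite I" "\<And>i. i \<in> I \<Longrightarrow> Cn_on n U (f i)"
  shows "Cn_on n U (\<lambda>x. \<Sum>i\<in>I. f i x)"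
  using assms by (induction I rule: finite_induct) (auto intro: Cn_add Cn_const)

lemma Cn_linear: "bounded_linear h \<Longrightarrow> Cn_on n U h"
proof (cases n)
  case 0
  assume "bounded_linear h"
  then show ?thesis using 0 by (simp add: linear_continuous_on)
next
  case (Suc m)
  assume "bounded_linear h"
  then show ?thesis using Suc
    by (auto intro!: exI[of _ "\<lambda>x. h"] Cn_const bounded_linear_imp_has_derivative)
qed

lemma Cn_pair: "Cn_on n U f \<Longrightarrow> Cn_on n U g \<Longrightarrow> Cn_on n U (\<lambda>x. (f x, g x))"
proof (induction n arbitrary: f g)
  case 0 then show ?case by (auto intro: continuous_on_Pair)
next
  case (Suc n)
  obtain f' where f: "\<forall>x\<in>U. (f has_derivative f' x) (at x)" "\<forall>v. Cn_on n U (\<lambda>x. f' x v)"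
    using Suc.prems by auto
  obtain g' where g: "\<forall>x\<in>U. (g has_derivative g' x) (at x)" "\<forall>v. Cn_on n U (\<lambda>x. g' x v)"
    using Suc.prems by auto
  show ?case
    apply (simp only: Cn_on.simps)
    apply (rule exI[of _ "\<lambda>x v. (f' x v, g' x v)"])
    using f g Suc.IH by (simp add: has_derivative_Pair)
qed


lemma Cn_comp:
  fixes f :: "'a::euclidean_space \<Rightarrow> 'b::euclidean_space" and g :: "'b \<Rightarrow> 'c::real_normed_vector"
  assumes "open U" "open V"
  shows "f ` U \<subseteq> V \<Longrightarrow> Cn_on n U f \<Longrightarrow> Cn_on n V g \<Longrightarrow> Cn_on n U (\<lambda>x. g (f x))"
proof (induction n arbitrary: f g)
  case 0
  have c: "continuous_on U f" "continuous_on V g" using 0 by simp_all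
  show ?case using continuous_on_compose2[OF c(2) c(1) 0(1)] by simp
next
  case (Suc n)
  obtain f' where f: "\<forall>x\<in>U. (f has_derivative f' x) (at x)" "\<forall>v. Cn_on n U (\<lambda>x. f' x v)"
    using Suc.prems by auto
  obtain g' where g: "\<forall>y\<in>V. (g has_derivative g' y) (at y)" "\<forall>v. Cn_on n V (\<lambda>y. g' y v)"
    using Suc.prems by auto
  have fn: "Cn_on n U f" using Suc.prems(2) by (rule Cn_mono)
  have der: "\<forall>x\<in>U. ((\<lambda>x. g (f x)) has_derivative (\<lambda>v. g' (f x) (f' x v))) (at x)"
  proof
    fix x assume x: "x \<in> U"
    have fx: "f x \<in> V" using x Suc.prems(1) by blast
    have "((g \<circ> f) has_derivative (g' (f x) \<circ> f' x)) (at x)"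
      by (rule diff_chain_at) (use f g x fx in blast)+
    then show "((\<lambda>x. g (f x)) has_derivative (\<lambda>v. g' (f x) (f' x v))) (at x)"
      by (simp add: o_def)
  qed
  have "Cn_on n U (\<lambda>x. g' (f x) (f' x v))" for v
  proof (rule Cn_cong[OF assms(1)])
    show "Cn_on n U (\<lambda>x. \<Sum>i\<in>Basis. (f' x v \<bullet> i) *\<^sub>R g' (f x) i)"
    proof (rule Cn_sum)
      fix i :: 'b assume "i \<in> Basis"
      have c1: "Cn_on n U (\<lambda>x. f' x v \<bullet> i)"
        by (rule Cn_bilinear[OF bounded_bilinear_inner, of n U "\<lambda>x. f' x v" "\<lambda>x. i"])
           (use f in blast, rule Cn_const)
      have c2: "Cn_on n U (\<lambda>x. g' (f x) i)"
        by (rule Suc.IH[OF Suc.prems(1) fn]) (use g in blast)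
      show "Cn_on n U (\<lambda>x. (f' x v \<bullet> i) *\<^sub>R g' (f x) i)"
        by (rule Cn_bilinear[OF bounded_bilinear_scaleR, OF c1 c2])
    qed (rule finite_Basis)
  next
    fix x assume x: "x \<in> U"
    then have "f x \<in> V" using Suc.prems(1) by blast
    then have lin: "linear (g' (f x))"
      using g has_derivative_linear by blast
    have "g' (f x) (f' x v) = g' (f x) (\<Sum>i\<in>Basis. (f' x v \<bullet> i) *\<^sub>R i)"
      by (simp only: euclidean_representation)
    also have "\<dots> = (\<Sum>i\<in>Basis. (f' x v \<bullet> i) *\<^sub>R g' (f x) i)"
      using lin by (simp add: linear_sum linear_scale)
    finally show "(\<Sum>i\<in>Basis. (f' x v \<bullet> i) *\<^sub>R g' (f x) i) = g' (f x) (f' x v)" by simp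
  qed
  then have cv: "\<forall>v. Cn_on n U (\<lambda>x. g' (f x) (f' x v))" by blast
  show ?case unfolding Cn_on.simps
    by (rule exI[of _ "\<lambda>x v. g' (f x) (f' x v)"]) (use der cv in simp)
qed

lemma Cn_inverse: "Cn_on n {0<..} (inverse :: real \<Rightarrow> real)"
proof (induction n)
  case 0 then show ?case by (auto intro!: continuous_on_inverse continuous_on_id)
next
  case (Suc n)
  have "Cn_on n {0<..} (\<lambda>x::real. - (inverse x ^ 2) * v)" for v
  proof -
    have "(\<lambda>x::real. - (inverse x ^ 2) * v) = (\<lambda>x. (inverse x * inverse x) * (- v))"
      by (auto simp: power2_eq_square)
    moreover have "Cn_on n {0<..} (\<lambda>x::real. (inverse x * inverse x) * (- v))"
      by (intro Cn_bilinear[OF bounded_bilinear_mult] Cn_const Suc)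
    ultimately show ?thesis by simp
  qed
  moreover have "\<forall>x\<in>{0<..}. (inverse has_derivative (*) (- (inverse x ^ 2))) (at (x::real))"
  proof
    fix x :: real assume "x \<in> {0<..}"
    then have d: "(inverse has_field_derivative - (inverse x ^ 2)) (at x)"
      using DERIV_inverse[of x UNIV] by (simp add: numeral_2_eq_2)
    then show "(inverse has_derivative (*) (- (inverse x ^ 2))) (at x)"
      by (simp only: has_field_derivative_def)
  qed
  ultimately show ?case unfolding Cn_on.simps
    by (intro exI[of _ "\<lambda>x. (*) (- (inverse x ^ 2))"]) auto
qed

lemma Cn_ln: "Cn_on n {0<..} (ln :: real \<Rightarrow> real)"
proof (cases n)
  case 0 then show ?thesis by (auto intro!: continuous_on_ln continuous_on_id)
next
  case (Suc m)
  have "Cn_on m {0<..} (\<lambda>x::real. inverse x * v)" for v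
    by (intro Cn_bilinear[OF bounded_bilinear_mult] Cn_const Cn_inverse)
  moreover have "\<forall>x\<in>{0<..}. (ln has_derivative (\<lambda>v. inverse x * v)) (at (x::real))"
    by (auto intro!: DERIV_ln[unfolded has_field_derivative_def])
  ultimately show ?thesis using Suc by auto
qed

lemma Cn_exp: "Cn_on n UNIV (exp :: real \<Rightarrow> real)"
proof (induction n)
  case 0 then show ?case by (auto intro!: continuous_on_exp continuous_on_id)
next
  case (Suc n)
  have "Cn_on n UNIV (\<lambda>x::real. exp x * v)" for v
    by (intro Cn_bilinear[OF bounded_bilinear_mult] Cn_const Suc)
  moreover have "\<forall>x. (exp has_derivative (\<lambda>v. exp x * v)) (at (x::real))"
    by (auto intro!: DERIV_exp[unfolded has_field_derivative_def])
  ultimately show ?case by auto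
qed



definition fmap :: "(real^4) \<times> (real^4) \<Rightarrow> ((real^4) \<times> (real^4)) \<times> real" where
  "fmap p = ((uu p /\<^sub>R norm (uu p), vv p /\<^sub>R norm (vv p)), ln (norm (uu p)))"
definition gmap :: "((real^4) \<times> (real^4)) \<times> real \<Rightarrow> (real^4) \<times> (real^4)" where
  "gmap w = Linv (exp (snd w) *\<^sub>R fst (fst w), exp (snd w) *\<^sub>R snd (fst w))"
definition Fsm :: "(real^4) \<times> (real^4) \<Rightarrow> ((real^4) \<times> (real^4)) \<times> real" where
  "Fsm p = ((exp (-(1/2) * ln (uu p \<bullet> uu p)) *\<^sub>R uu p, exp (-(1/2) * ln (vv p \<bullet> vv p)) *\<^sub>R vv p),
            (1/2) * ln (uu p \<bullet> uu p))"
definition Uo :: "((real^4) \<times> (real^4)) set" where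
  "Uo = {p. 0 < uu p \<bullet> uu p \<and> 0 < vv p \<bullet> vv p}"

lemma open_Uo: "open Uo"
proof -
  have c1: "continuous_on UNIV uu" "continuous_on UNIV vv"
    using lin_uu lin_vv linear_continuous_on by blast+
  show ?thesis unfolding Uo_def
    by (intro open_Collect_conj open_Collect_less continuous_on_inner c1 continuous_on_const)
qed

lemma Cn_sq:
  assumes "bounded_linear h" "\<And>p. p \<in> Uo \<Longrightarrow> 0 < h p \<bullet> h p"
  shows "Cn_on n Uo (\<lambda>p. exp (-(1/2) * ln (h p \<bullet> h p)) *\<^sub>R h p)"
    and "Cn_on n Uo (\<lambda>p. (1/2) * ln (h p \<bullet> h p))"
proof -
  have a: "Cn_on n Uo (\<lambda>p. h p \<bullet> h p)"
    by (intro Cn_bilinear[OF bounded_bilinear_inner] Cn_linear assms(1))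
  have b: "Cn_on n Uo (\<lambda>p. ln (h p \<bullet> h p))"
    by (rule Cn_comp[OF open_Uo open_greaterThan _ a Cn_ln]) (use assms(2) in auto)
  show "Cn_on n Uo (\<lambda>p. (1/2) * ln (h p \<bullet> h p))"
    by (intro Cn_bilinear[OF bounded_bilinear_mult] Cn_const b)
  have c: "Cn_on n Uo (\<lambda>p. -(1/2) * ln (h p \<bullet> h p))"
    by (intro Cn_bilinear[OF bounded_bilinear_mult] Cn_const b)
  have d: "Cn_on n Uo (\<lambda>p. exp (-(1/2) * ln (h p \<bullet> h p)))"
    by (rule Cn_comp[OF open_Uo open_UNIV _ c Cn_exp]) auto
  show "Cn_on n Uo (\<lambda>p. exp (-(1/2) * ln (h p \<bullet> h p)) *\<^sub>R h p)"
    by (intro Cn_bilinear[OF bounded_bilinear_scaleR] d Cn_linear assms(1))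
qed

lemma Cn_Fsm: "Cn_on n Uo Fsm"
  unfolding Fsm_def
  by (intro Cn_pair Cn_sq lin_uu lin_vv) (auto simp: Uo_def)

lemma Cn_gmap: "Cn_on n UNIV gmap"
proof -
  have l1: "bounded_linear (\<lambda>w::((real^4) \<times> (real^4)) \<times> real. fst (fst w))"
    using bounded_linear_compose[OF bounded_linear_fst bounded_linear_fst] by simp
  have l2: "bounded_linear (\<lambda>w::((real^4) \<times> (real^4)) \<times> real. snd (fst w))"
    using bounded_linear_compose[OF bounded_linear_snd bounded_linear_fst] by simp
  have e: "Cn_on n UNIV (\<lambda>w::((real^4) \<times> (real^4)) \<times> real. exp (snd w))"
    by (rule Cn_comp[OF open_UNIV open_UNIV _ Cn_linear[OF bounded_linear_snd] Cn_exp]) auto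
  have p: "Cn_on n UNIV (\<lambda>w::((real^4) \<times> (real^4)) \<times> real.
             (exp (snd w) *\<^sub>R fst (fst w), exp (snd w) *\<^sub>R snd (fst w)))"
    by (intro Cn_pair Cn_bilinear[OF bounded_bilinear_scaleR] e Cn_linear l1 l2)
  show ?thesis unfolding gmap_def
    by (rule Cn_comp[OF open_UNIV open_UNIV _ p Cn_linear[OF lin_Linv]]) auto
qed

lemma SH_mem: "p \<in> SH \<longleftrightarrow> p \<noteq> (0,0) \<and> Bf (fst p) (snd p) = 0"
  by (cases p) (simp add: SH_def SH_iff)

lemma uv_zero: "uu p = 0 \<Longrightarrow> vv p = 0 \<Longrightarrow> p = (0,0)"
proof -
  assume "uu p = 0" "vv p = 0"
  then have "p = Linv (0, 0)" using Linv_L[of p] by simp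
  also have "\<dots> = 0" using linear_0[OF bounded_linear.linear[OF lin_Linv]] by (simp add: zero_prod_def)
  finally show ?thesis by (simp add: zero_prod_def)
qed

lemma SH_facts:
  assumes "p \<in> SH"
  shows "norm (uu p) = norm (vv p)" "uu p \<noteq> 0" "vv p \<noteq> 0"
proof -
  have "uu p \<bullet> uu p = vv p \<bullet> vv p" using assms B_uv[of p] by (simp add: SH_mem)
  then show n: "norm (uu p) = norm (vv p)" by (simp add: norm_eq_sqrt_inner)
  have "p \<noteq> (0,0)" using assms by (simp add: SH_mem)
  then have "uu p \<noteq> 0 \<or> vv p \<noteq> 0" using uv_zero by blast
  then show "uu p \<noteq> 0" "vv p \<noteq> 0" using n by auto
qed

lemma log_facts:
  fixes w :: "real^4"
  assumes "w \<noteq> 0"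
  shows "exp (-(1/2) * ln (w \<bullet> w)) = inverse (norm w)" "(1/2) * ln (w \<bullet> w) = ln (norm w)"
proof -
  have pos: "0 < norm w" using assms by simp
  have "ln (w \<bullet> w) = 2 * ln (norm w)"
    using ln_realpow[of "norm w" 2] by (simp add: power2_norm_eq_inner[symmetric])
  then show "(1/2) * ln (w \<bullet> w) = ln (norm w)" by simp
  show "exp (-(1/2) * ln (w \<bullet> w)) = inverse (norm w)"
    using \<open>ln (w \<bullet> w) = 2 * ln (norm w)\<close> pos by (simp add: exp_minus)
qed

theorem lemma3p9:
  shows "diffeomorphic SH
           ((sphere (0::real^4) 1 \<times> sphere (0::real^4) 1) \<times> (UNIV :: real set))"
  unfolding diffeomorphic_def
proof (intro exI conjI)
  show "fmap ` SH \<subseteq> (sphere 0 1 \<times> sphere 0 1) \<times> UNIV"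
  proof
    fix y assume "y \<in> fmap ` SH"
    then obtain p where p: "p \<in> SH" "y = fmap p" by blast
    show "y \<in> (sphere 0 1 \<times> sphere 0 1) \<times> UNIV"
      using SH_facts[OF p(1)] p(2) by (simp add: fmap_def)
  qed
  show "gmap ` ((sphere 0 1 \<times> sphere 0 1) \<times> UNIV) \<subseteq> SH"
  proof
    fix y assume "y \<in> gmap ` ((sphere 0 1 \<times> sphere 0 1) \<times> UNIV)"
    then obtain a b t where ab: "norm (a::real^4) = 1" "norm (b::real^4) = 1" "y = gmap ((a, b), t)"
      by auto
    have u: "uu y = exp t *\<^sub>R a" and v: "vv y = exp t *\<^sub>R b"
      using ab(3) by (simp_all add: gmap_def uu_Linv vv_Linv)
    have aa: "a \<bullet> a = 1" "b \<bullet> b = 1" using ab(1,2) by (simp_all add: power2_norm_eq_inner[symmetric])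
    have "4 * Bf (fst y) (snd y) = 0" using B_uv[of y] u v aa by simp
    moreover have "y \<noteq> (0,0)"
    proof
      assume "y = (0,0)"
      then have "uu y = 0" using linear_0[OF bounded_linear.linear[OF lin_uu]] by (simp add: zero_prod_def)
      then show False using u ab(1) by auto
    qed
    ultimately show "y \<in> SH" by (simp add: SH_mem)
  qed
  show "\<forall>p\<in>SH. gmap (fmap p) = p"
  proof
    fix p assume p: "p \<in> SH"
    note h = SH_facts[OF p]
    have e: "exp (ln (norm (uu p))) = norm (uu p)" using h by simp
    have e1: "exp (ln (norm (uu p))) *\<^sub>R (uu p /\<^sub>R norm (uu p)) = uu p" using h e by simp
    have e2: "exp (ln (norm (uu p))) *\<^sub>R (vv p /\<^sub>R norm (vv p)) = vv p" using h e by simp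
    have "gmap (fmap p) = Linv (uu p, vv p)"
      by (simp only: gmap_def fmap_def fst_conv snd_conv e1 e2)
    then show "gmap (fmap p) = p" by (simp add: Linv_L)
  qed
  show "\<forall>y\<in>(sphere 0 1 \<times> sphere 0 1) \<times> UNIV. fmap (gmap y) = y"
  proof
    fix y assume "y \<in> ((sphere (0::real^4) 1 \<times> sphere (0::real^4) 1) \<times> (UNIV :: real set))"
    then obtain a b t where ab: "norm (a::real^4) = 1" "norm (b::real^4) = 1" "y = ((a, b), t)"
      by auto
    have u: "uu (gmap y) = exp t *\<^sub>R a" and v: "vv (gmap y) = exp t *\<^sub>R b"
      using ab(3) by (simp_all add: gmap_def uu_Linv vv_Linv)
    have n1: "norm (exp t *\<^sub>R a) = exp t" using ab(1) by simp
    have n2: "norm (exp t *\<^sub>R b) = exp t" using ab(2) by simp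
    have "fmap (gmap y) = ((exp t *\<^sub>R a /\<^sub>R exp t, exp t *\<^sub>R b /\<^sub>R exp t), ln (exp t))"
      by (simp only: fmap_def u v n1 n2)
    then show "fmap (gmap y) = y" using ab(3) by simp
  qed
  show "smooth_map_on SH fmap"
    unfolding smooth_map_on_def
  proof
    fix p assume p: "p \<in> SH"
    note h = SH_facts[OF p]
    have "p \<in> Uo" using h by (simp add: Uo_def)
    moreover have "smooth_on_open Uo Fsm" using open_Uo Cn_Fsm by (simp add: smooth_on_open_def)
    moreover have "\<forall>y\<in>SH \<inter> Uo. Fsm y = fmap y"
    proof
      fix y assume "y \<in> SH \<inter> Uo"
      then have "uu y \<noteq> 0" "vv y \<noteq> 0" by (auto simp: Uo_def)
      note l1 = log_facts[OF this(1)] and l2 = log_facts[OF this(2)]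
      have "Fsm y = ((inverse (norm (uu y)) *\<^sub>R uu y, inverse (norm (vv y)) *\<^sub>R vv y), ln (norm (uu y)))"
        by (simp only: Fsm_def l1 l2)
      then show "Fsm y = fmap y" by (simp add: fmap_def)
    qed
    ultimately show "\<exists>U F. p \<in> U \<and> smooth_on_open U F \<and> (\<forall>y\<in>SH \<inter> U. F y = fmap y)"
      by blast
  qed
  show "smooth_map_on ((sphere 0 1 \<times> sphere 0 1) \<times> UNIV) gmap"
    unfolding smooth_map_on_def smooth_on_open_def
    using Cn_gmap by blast
qed

end
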